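(* Let $q$ be a prime power, let $R$ be a finite local ring containing the field $\mathbb{F}_q$ as a subring, let $R^*$ be its set of units, $\delta=\dim_{\mathbb{F}_q}(R\setminus R^* )$, and let $F=R/(R\setminus R^* )$ (a field containing $\mathbb{F}_q$ via the quotient map). If the chain geometry $\Sigma(\mathbb{F}_q,F)$ contains a blocking set of size $x$, then $\Sigma(\mathbb{F}_q,R)$ contains a blocking set of size $xq^{\delta}$.
   Context: All rings are associative with unit element $1\neq 0$, and subrings share the unit. For a ring $S$, $S^2$ is regarded as a left $S$-module and the projective line $\mathbb{P}(S)$ is the set of all submodules of $S^2$ of the form $S(a,b)$ where $(a\ b)$ is the first row of some invertible $2\times 2$ matrix over $S$. For a field $K\subseteq S$ (as a subring), $\mathbb{P}(K)$ is embedded in $\mathbb{P}(S)$ via $K(a,b)\mapsto S(a,b)$. The chain geometry $\Sigma(K,S)$ has point set $\mathbb{P}(S)$ and its blocks, called chains, are the sets $\mathbb{P}(K)^g$ with $g\in\mathrm{GL}_2(S)$. A blocking set is a set $B$ of points such that every chain contains at least one element of $B$. *)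

theory Defs
  imports "HOL-Algebra.Algebra" "HOL-Computational_Algebra.Primes"
begin

definition local_ring :: "('a, 'b) ring_scheme \<Rightarrow> bool" where
  "local_ring R \<longleftrightarrow> ring R \<and> \<one>\<^bsub>R\<^esub> \<noteq> \<zero>\<^bsub>R\<^esub> \<and>
     ideal (carrier R - Units R) R"

definition invertible2 :: "('a, 'b) ring_scheme \<Rightarrow> 'a set \<Rightarrow> 'a \<Rightarrow> 'a \<Rightarrow> 'a \<Rightarrow> 'a \<Rightarrow> bool" where
  "invertible2 S A a b c d \<longleftrightarrow> a \<in> A \<and> b \<in> A \<and> c \<in> A \<and> d \<in> A \<and>
     (\<exists>a' \<in> A. \<exists>b' \<in> A. \<exists>c' \<in> A. \<exists>d' \<in> A.
        a \<otimes>\<^bsub>S\<^esub> a' \<oplus>\<^bsub>S\<^esub> b \<otimes>\<^bsub>S\<^esub> c' = \<one>\<^bsub>S\<^esub> \<and>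
        a \<otimes>\<^bsub>S\<^esub> b' \<oplus>\<^bsub>S\<^esub> b \<otimes>\<^bsub>S\<^esub> d' = \<zero>\<^bsub>S\<^esub> \<and>
        c \<otimes>\<^bsub>S\<^esub> a' \<oplus>\<^bsub>S\<^esub> d \<otimes>\<^bsub>S\<^esub> c' = \<zero>\<^bsub>S\<^esub> \<and>
        c \<otimes>\<^bsub>S\<^esub> b' \<oplus>\<^bsub>S\<^esub> d \<otimes>\<^bsub>S\<^esub> d' = \<one>\<^bsub>S\<^esub> \<and>
        a' \<otimes>\<^bsub>S\<^esub> a \<oplus>\<^bsub>S\<^esub> b' \<otimes>\<^bsub>S\<^esub> c = \<one>\<^bsub>S\<^esub> \<and>
        a' \<otimes>\<^bsub>S\<^esub> b \<oplus>\<^bsub>S\<^esub> b' \<otimes>\<^bsub>S\<^esub> d = \<zero>\<^bsub>S\<^esub> \<and>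
        c' \<otimes>\<^bsub>S\<^esub> a \<oplus>\<^bsub>S\<^esub> d' \<otimes>\<^bsub>S\<^esub> c = \<zero>\<^bsub>S\<^esub> \<and>
        c' \<otimes>\<^bsub>S\<^esub> b \<oplus>\<^bsub>S\<^esub> d' \<otimes>\<^bsub>S\<^esub> d = \<one>\<^bsub>S\<^esub>)"

definition admissible :: "('a, 'b) ring_scheme \<Rightarrow> 'a set \<Rightarrow> 'a \<Rightarrow> 'a \<Rightarrow> bool" where
  "admissible S A a b \<longleftrightarrow> (\<exists>c d. invertible2 S A a b c d)"

definition lspan :: "('a, 'b) ring_scheme \<Rightarrow> 'a \<Rightarrow> 'a \<Rightarrow> ('a \<times> 'a) set" where
  "lspan S a b = {(s \<otimes>\<^bsub>S\<^esub> a, s \<otimes>\<^bsub>S\<^esub> b) | s. s \<in> carrier S}"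

definition proj_line :: "('a, 'b) ring_scheme \<Rightarrow> ('a \<times> 'a) set set" where
  "proj_line S = {lspan S a b | a b. admissible S (carrier S) a b}"

definition GL2 :: "('a, 'b) ring_scheme \<Rightarrow> ('a \<times> 'a \<times> 'a \<times> 'a) set" where
  "GL2 S = {(g11, g12, g21, g22) | g11 g12 g21 g22. invertible2 S (carrier S) g11 g12 g21 g22}"

text \<open>The image P(K)^g of the embedded projective line P(K) under g (acting on
  row vectors from the right): S(a,b) with K(a,b) in P(K) goes to S((a,b)g).\<close>
definition chain_of :: "('a, 'b) ring_scheme \<Rightarrow> 'a set \<Rightarrow> ('a \<times> 'a \<times> 'a \<times> 'a) \<Rightarrow> ('a \<times> 'a) set set" where
  "chain_of S K g = (case g of (g11, g12, g21, g22) \<Rightarrow>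
     {lspan S (a \<otimes>\<^bsub>S\<^esub> g11 \<oplus>\<^bsub>S\<^esub> b \<otimes>\<^bsub>S\<^esub> g21) (a \<otimes>\<^bsub>S\<^esub> g12 \<oplus>\<^bsub>S\<^esub> b \<otimes>\<^bsub>S\<^esub> g22)
       | a b. admissible S K a b})"

definition chains :: "('a, 'b) ring_scheme \<Rightarrow> 'a set \<Rightarrow> ('a \<times> 'a) set set set" where
  "chains S K = chain_of S K ` GL2 S"

definition blocking_set :: "('a, 'b) ring_scheme \<Rightarrow> 'a set \<Rightarrow> ('a \<times> 'a) set set \<Rightarrow> bool" where
  "blocking_set S K B \<longleftrightarrow> B \<subseteq> proj_line S \<and> (\<forall>C \<in> chains S K. C \<inter> B \<noteq> {})"

definition prime_power :: "nat \<Rightarrow> bool" where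
  "prime_power q \<longleftrightarrow> (\<exists>p n. Factorial_Ring.prime (p::nat) \<and> n > 0 \<and> q = p ^ n)"

end

theory Submission
  imports Defs "HOL-Algebra.Embedded_Algebras"
begin


lemma (in ring) ident4:
  assumes "x1\<in>carrier R" "x2\<in>carrier R" "y1\<in>carrier R" "y2\<in>carrier R" "y3\<in>carrier R" "y4\<in>carrier R"
   "z1\<in>carrier R" "z2\<in>carrier R" "z3\<in>carrier R" "z4\<in>carrier R" "w1\<in>carrier R" "w2\<in>carrier R"
  shows "(x1 \<otimes> y1 \<oplus> x2 \<otimes> y3) \<otimes> (z1 \<otimes> w1 \<oplus> z2 \<otimes> w2) \<oplus> (x1 \<otimes> y2 \<oplus> x2 \<otimes> y4) \<otimes> (z3 \<otimes> w1 \<oplus> z4 \<otimes> w2)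
   = x1 \<otimes> (y1 \<otimes> z1 \<oplus> y2 \<otimes> z3) \<otimes> w1 \<oplus> x1 \<otimes> (y1 \<otimes> z2 \<oplus> y2 \<otimes> z4) \<otimes> w2 \<oplus>
     (x2 \<otimes> (y3 \<otimes> z1 \<oplus> y4 \<otimes> z3) \<otimes> w1 \<oplus> x2 \<otimes> (y3 \<otimes> z2 \<oplus> y4 \<otimes> z4) \<otimes> w2)"
  using assms by (simp add: l_distr r_distr m_assoc a_ac)

lemma (in ring) inv2_prod:
  assumes A: "A \<subseteq> carrier R" and "invertible2 R A k1 k2 k3 k4"
    and "invertible2 R (carrier R) g1 g2 g3 g4"
  shows "admissible R (carrier R) (k1 \<otimes> g1 \<oplus> k2 \<otimes> g3) (k1 \<otimes> g2 \<oplus> k2 \<otimes> g4)"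
proof -
  from assms obtain k1' k2' k3' k4' where k: "k1\<in>A" "k2\<in>A" "k3\<in>A" "k4\<in>A" "k1'\<in>A" "k2'\<in>A" "k3'\<in>A" "k4'\<in>A"
    and ke: "k1 \<otimes> k1' \<oplus> k2 \<otimes> k3' = \<one>"
        "k1 \<otimes> k2' \<oplus> k2 \<otimes> k4' = \<zero>"
        "k3 \<otimes> k1' \<oplus> k4 \<otimes> k3' = \<zero>"
        "k3 \<otimes> k2' \<oplus> k4 \<otimes> k4' = \<one>"
        "k1' \<otimes> k1 \<oplus> k2' \<otimes> k3 = \<one>"
        "k1' \<otimes> k2 \<oplus> k2' \<otimes> k4 = \<zero>"
        "k3' \<otimes> k1 \<oplus> k4' \<otimes> k3 = \<zero>"
        "k3' \<otimes> k2 \<oplus> k4' \<otimes> k4 = \<one>"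
    unfolding invertible2_def by blast
  from assms obtain g1' g2' g3' g4' where g: "g1\<in>carrier R" "g2\<in>carrier R" "g3\<in>carrier R" "g4\<in>carrier R"
     "g1'\<in>carrier R" "g2'\<in>carrier R" "g3'\<in>carrier R" "g4'\<in>carrier R"
    and ge: "g1 \<otimes> g1' \<oplus> g2 \<otimes> g3' = \<one>"
        "g1 \<otimes> g2' \<oplus> g2 \<otimes> g4' = \<zero>"
        "g3 \<otimes> g1' \<oplus> g4 \<otimes> g3' = \<zero>"
        "g3 \<otimes> g2' \<oplus> g4 \<otimes> g4' = \<one>"
        "g1' \<otimes> g1 \<oplus> g2' \<otimes> g3 = \<one>"
        "g1' \<otimes> g2 \<oplus> g2' \<otimes> g4 = \<zero>"
        "g3' \<otimes> g1 \<oplus> g4' \<otimes> g3 = \<zero>"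
        "g3' \<otimes> g2 \<oplus> g4' \<otimes> g4 = \<one>"
    unfolding invertible2_def by blast
  have kc: "k1\<in>carrier R" "k2\<in>carrier R" "k3\<in>carrier R" "k4\<in>carrier R" "k1'\<in>carrier R" "k2'\<in>carrier R" "k3'\<in>carrier R" "k4'\<in>carrier R"
    using k A by auto
  note c = kc g
  show ?thesis
    unfolding admissible_def invertible2_def
    apply (rule exI[of _ "k3 \<otimes> g1 \<oplus> k4 \<otimes> g3"], rule exI[of _ "k3 \<otimes> g2 \<oplus> k4 \<otimes> g4"])
    apply (intro conjI)
    using c apply simp
    using c apply simp
    using c apply simp
    using c apply simp
    apply (rule bexI[of _ "g1' \<otimes> k1' \<oplus> g2' \<otimes> k3'"], rule bexI[of _ "g1' \<otimes> k2' \<oplus> g2' \<otimes> k4'"],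
       rule bexI[of _ "g3' \<otimes> k1' \<oplus> g4' \<otimes> k3'"], rule bexI[of _ "g3' \<otimes> k2' \<oplus> g4' \<otimes> k4'"])
    apply (intro conjI)
    using ident4[of k1 k2 g1 g2 g3 g4 g1' g2' g3' g4' k1' k3'] c ge ke apply simp
    using ident4[of k1 k2 g1 g2 g3 g4 g1' g2' g3' g4' k2' k4'] c ge ke apply simp
    using ident4[of k3 k4 g1 g2 g3 g4 g1' g2' g3' g4' k1' k3'] c ge ke apply simp
    using ident4[of k3 k4 g1 g2 g3 g4 g1' g2' g3' g4' k2' k4'] c ge ke apply simp
    using ident4[of g1' g2' k1' k2' k3' k4' k1 k2 k3 k4 g1 g3] c ge ke apply simp
    using ident4[of g1' g2' k1' k2' k3' k4' k1 k2 k3 k4 g2 g4] c ge ke apply simp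
    using ident4[of g3' g4' k1' k2' k3' k4' k1 k2 k3 k4 g1 g3] c ge ke apply simp
    using ident4[of g3' g4' k1' k2' k3' k4' k1 k2 k3 k4 g2 g4] c ge ke apply simp
    using c by simp_all
qed

lemma inv2_hom:
  assumes "ring_hom_ring R S h" "A \<subseteq> carrier R" "invertible2 R A a b c d"
  shows "invertible2 S (h ` A) (h a) (h b) (h c) (h d)"
proof -
  interpret H: ring_hom_ring R S h by fact
  from assms obtain a' b' c' d' where k: "a\<in>A" "b\<in>A" "c\<in>A" "d\<in>A" "a'\<in>A" "b'\<in>A" "c'\<in>A" "d'\<in>A"
    and e: "a \<otimes>\<^bsub>R\<^esub> a' \<oplus>\<^bsub>R\<^esub> b \<otimes>\<^bsub>R\<^esub> c' = \<one>\<^bsub>R\<^esub>"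
        "a \<otimes>\<^bsub>R\<^esub> b' \<oplus>\<^bsub>R\<^esub> b \<otimes>\<^bsub>R\<^esub> d' = \<zero>\<^bsub>R\<^esub>"
        "c \<otimes>\<^bsub>R\<^esub> a' \<oplus>\<^bsub>R\<^esub> d \<otimes>\<^bsub>R\<^esub> c' = \<zero>\<^bsub>R\<^esub>"
        "c \<otimes>\<^bsub>R\<^esub> b' \<oplus>\<^bsub>R\<^esub> d \<otimes>\<^bsub>R\<^esub> d' = \<one>\<^bsub>R\<^esub>"
        "a' \<otimes>\<^bsub>R\<^esub> a \<oplus>\<^bsub>R\<^esub> b' \<otimes>\<^bsub>R\<^esub> c = \<one>\<^bsub>R\<^esub>"
        "a' \<otimes>\<^bsub>R\<^esub> b \<oplus>\<^bsub>R\<^esub> b' \<otimes>\<^bsub>R\<^esub> d = \<zero>\<^bsub>R\<^esub>"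
        "c' \<otimes>\<^bsub>R\<^esub> a \<oplus>\<^bsub>R\<^esub> d' \<otimes>\<^bsub>R\<^esub> c = \<zero>\<^bsub>R\<^esub>"
        "c' \<otimes>\<^bsub>R\<^esub> b \<oplus>\<^bsub>R\<^esub> d' \<otimes>\<^bsub>R\<^esub> d = \<one>\<^bsub>R\<^esub>"
    unfolding invertible2_def by blast
  have c: "a\<in>carrier R" "b\<in>carrier R" "c\<in>carrier R" "d\<in>carrier R" "a'\<in>carrier R" "b'\<in>carrier R" "c'\<in>carrier R" "d'\<in>carrier R"
    using k assms(2) by auto
  have he: "\<And>x y u v. x\<in>carrier R \<Longrightarrow> y\<in>carrier R \<Longrightarrow> u\<in>carrier R \<Longrightarrow> v\<in>carrier R \<Longrightarrow>
     h (x \<otimes>\<^bsub>R\<^esub> y \<oplus>\<^bsub>R\<^esub> u \<otimes>\<^bsub>R\<^esub> v) = h x \<otimes>\<^bsub>S\<^esub> h y \<oplus>\<^bsub>S\<^esub> h u \<otimes>\<^bsub>S\<^esub> h v"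
    by simp
  have f: "h a \<otimes>\<^bsub>S\<^esub> h a' \<oplus>\<^bsub>S\<^esub> h b \<otimes>\<^bsub>S\<^esub> h c' = \<one>\<^bsub>S\<^esub>"
        "h a \<otimes>\<^bsub>S\<^esub> h b' \<oplus>\<^bsub>S\<^esub> h b \<otimes>\<^bsub>S\<^esub> h d' = \<zero>\<^bsub>S\<^esub>"
        "h c \<otimes>\<^bsub>S\<^esub> h a' \<oplus>\<^bsub>S\<^esub> h d \<otimes>\<^bsub>S\<^esub> h c' = \<zero>\<^bsub>S\<^esub>"
        "h c \<otimes>\<^bsub>S\<^esub> h b' \<oplus>\<^bsub>S\<^esub> h d \<otimes>\<^bsub>S\<^esub> h d' = \<one>\<^bsub>S\<^esub>"
        "h a' \<otimes>\<^bsub>S\<^esub> h a \<oplus>\<^bsub>S\<^esub> h b' \<otimes>\<^bsub>S\<^esub> h c = \<one>\<^bsub>S\<^esub>"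
        "h a' \<otimes>\<^bsub>S\<^esub> h b \<oplus>\<^bsub>S\<^esub> h b' \<otimes>\<^bsub>S\<^esub> h d = \<zero>\<^bsub>S\<^esub>"
        "h c' \<otimes>\<^bsub>S\<^esub> h a \<oplus>\<^bsub>S\<^esub> h d' \<otimes>\<^bsub>S\<^esub> h c = \<zero>\<^bsub>S\<^esub>"
        "h c' \<otimes>\<^bsub>S\<^esub> h b \<oplus>\<^bsub>S\<^esub> h d' \<otimes>\<^bsub>S\<^esub> h d = \<one>\<^bsub>S\<^esub>"
    using he[of a a' b c'] he[of a b' b d'] he[of c a' d c'] he[of c b' d d']
      he[of a' a b' c] he[of a' b b' d] he[of c' a d' c] he[of c' b d' d] c e by simp_all
  have m: "h a \<in> h ` A" "h b \<in> h ` A" "h c \<in> h ` A" "h d \<in> h ` A" "h a' \<in> h ` A" "h b' \<in> h ` A" "h c' \<in> h ` A" "h d' \<in> h ` A"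
    using k by auto
  show ?thesis
    unfolding invertible2_def using f m by blast
qed

lemma inv2_lift:
  assumes "ring_hom_ring R S h" "A \<subseteq> carrier R" "inj_on h A" "\<one>\<^bsub>R\<^esub> \<in> A" "\<zero>\<^bsub>R\<^esub> \<in> A"
    "\<And>x y. x \<in> A \<Longrightarrow> y \<in> A \<Longrightarrow> x \<otimes>\<^bsub>R\<^esub> y \<in> A"
    "\<And>x y. x \<in> A \<Longrightarrow> y \<in> A \<Longrightarrow> x \<oplus>\<^bsub>R\<^esub> y \<in> A"
    "invertible2 S (h ` A) \<alpha> \<beta> \<gamma> \<delta>"
  shows "\<exists>a b c d. \<alpha> = h a \<and> \<beta> = h b \<and> \<gamma> = h c \<and> \<delta> = h d \<and> invertible2 R A a b c d"
proof -
  interpret H: ring_hom_ring R S h by fact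
  from assms(8) obtain \<alpha>' \<beta>' \<gamma>' \<delta>' where m: "\<alpha> \<in> h ` A" "\<beta> \<in> h ` A" "\<gamma> \<in> h ` A" "\<delta> \<in> h ` A"
     "\<alpha>' \<in> h ` A" "\<beta>' \<in> h ` A" "\<gamma>' \<in> h ` A" "\<delta>' \<in> h ` A"
    and e0: "\<alpha> \<otimes>\<^bsub>S\<^esub> \<alpha>' \<oplus>\<^bsub>S\<^esub> \<beta> \<otimes>\<^bsub>S\<^esub> \<gamma>' = \<one>\<^bsub>S\<^esub>"
        "\<alpha> \<otimes>\<^bsub>S\<^esub> \<beta>' \<oplus>\<^bsub>S\<^esub> \<beta> \<otimes>\<^bsub>S\<^esub> \<delta>' = \<zero>\<^bsub>S\<^esub>"
        "\<gamma> \<otimes>\<^bsub>S\<^esub> \<alpha>' \<oplus>\<^bsub>S\<^esub> \<delta> \<otimes>\<^bsub>S\<^esub> \<gamma>' = \<zero>\<^bsub>S\<^esub>"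
        "\<gamma> \<otimes>\<^bsub>S\<^esub> \<beta>' \<oplus>\<^bsub>S\<^esub> \<delta> \<otimes>\<^bsub>S\<^esub> \<delta>' = \<one>\<^bsub>S\<^esub>"
        "\<alpha>' \<otimes>\<^bsub>S\<^esub> \<alpha> \<oplus>\<^bsub>S\<^esub> \<beta>' \<otimes>\<^bsub>S\<^esub> \<gamma> = \<one>\<^bsub>S\<^esub>"
        "\<alpha>' \<otimes>\<^bsub>S\<^esub> \<beta> \<oplus>\<^bsub>S\<^esub> \<beta>' \<otimes>\<^bsub>S\<^esub> \<delta> = \<zero>\<^bsub>S\<^esub>"
        "\<gamma>' \<otimes>\<^bsub>S\<^esub> \<alpha> \<oplus>\<^bsub>S\<^esub> \<delta>' \<otimes>\<^bsub>S\<^esub> \<gamma> = \<zero>\<^bsub>S\<^esub>"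
        "\<gamma>' \<otimes>\<^bsub>S\<^esub> \<beta> \<oplus>\<^bsub>S\<^esub> \<delta>' \<otimes>\<^bsub>S\<^esub> \<delta> = \<one>\<^bsub>S\<^esub>"
    unfolding invertible2_def by blast
  obtain a where a: "a\<in>A" "\<alpha> = h a" using m(1) by blast
  obtain b where b: "b\<in>A" "\<beta> = h b" using m(2) by blast
  obtain c where c: "c\<in>A" "\<gamma> = h c" using m(3) by blast
  obtain d where d: "d\<in>A" "\<delta> = h d" using m(4) by blast
  obtain a' where a': "a'\<in>A" "\<alpha>' = h a'" using m(5) by blast
  obtain b' where b': "b'\<in>A" "\<beta>' = h b'" using m(6) by blast
  obtain c' where c': "c'\<in>A" "\<gamma>' = h c'" using m(7) by blast
  obtain d' where d': "d'\<in>A" "\<delta>' = h d'" using m(8) by blast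
  note k = a(1) b(1) c(1) d(1) a'(1) b'(1) c'(1) d'(1)
  note hs = a(2) b(2) c(2) d(2)
  note hs' = a'(2) b'(2) c'(2) d'(2)
  note e = e0[unfolded hs hs']
  have E: "\<And>x y u v t. x\<in>A \<Longrightarrow> y\<in>A \<Longrightarrow> u\<in>A \<Longrightarrow> v\<in>A \<Longrightarrow> t \<in> A \<Longrightarrow>
     h x \<otimes>\<^bsub>S\<^esub> h y \<oplus>\<^bsub>S\<^esub> h u \<otimes>\<^bsub>S\<^esub> h v = h t \<Longrightarrow> x \<otimes>\<^bsub>R\<^esub> y \<oplus>\<^bsub>R\<^esub> u \<otimes>\<^bsub>R\<^esub> v = t"
  proof -
    fix x y u v t assume *: "x\<in>A" "y\<in>A" "u\<in>A" "v\<in>A" "t\<in>A" "h x \<otimes>\<^bsub>S\<^esub> h y \<oplus>\<^bsub>S\<^esub> h u \<otimes>\<^bsub>S\<^esub> h v = h t"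
    hence "h (x \<otimes>\<^bsub>R\<^esub> y \<oplus>\<^bsub>R\<^esub> u \<otimes>\<^bsub>R\<^esub> v) = h t" using assms(2) by (auto simp: subset_iff)
    moreover have "x \<otimes>\<^bsub>R\<^esub> y \<oplus>\<^bsub>R\<^esub> u \<otimes>\<^bsub>R\<^esub> v \<in> A" using * assms(6,7) by auto
    ultimately show "x \<otimes>\<^bsub>R\<^esub> y \<oplus>\<^bsub>R\<^esub> u \<otimes>\<^bsub>R\<^esub> v = t" using assms(3) *(5) by (meson inj_onD)
  qed
  have "invertible2 R A a b c d"
    unfolding invertible2_def
    apply (intro conjI)
    using k apply (simp_all only: )
    apply (rule bexI[of _ a'], rule bexI[of _ b'], rule bexI[of _ c'], rule bexI[of _ d'])
    using k apply (simp_all only: )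
    apply (intro conjI)
    apply (rule E[OF k(1) k(5) k(2) k(7) assms(4)], simp add: e(1))
    apply (rule E[OF k(1) k(6) k(2) k(8) assms(5)], simp add: e(2))
    apply (rule E[OF k(3) k(5) k(4) k(7) assms(5)], simp add: e(3))
    apply (rule E[OF k(3) k(6) k(4) k(8) assms(4)], simp add: e(4))
    apply (rule E[OF k(5) k(1) k(6) k(3) assms(4)], simp add: e(5))
    apply (rule E[OF k(5) k(2) k(6) k(4) assms(5)], simp add: e(6))
    apply (rule E[OF k(7) k(1) k(8) k(3) assms(5)], simp add: e(7))
    apply (rule E[OF k(7) k(2) k(8) k(4) assms(4)], simp add: e(8))
    done
  thus ?thesis using hs by (intro exI[of _ a] exI[of _ b] exI[of _ c] exI[of _ d]) simp
qed

lemma (in ring) lspan_mem: "p \<in> lspan R a b \<longleftrightarrow> (\<exists>s\<in>carrier R. p = (s \<otimes> a, s \<otimes> b))"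
  unfolding lspan_def by auto

lemma (in ring) lspan_self: "a \<in> carrier R \<Longrightarrow> b \<in> carrier R \<Longrightarrow> (a, b) \<in> lspan R a b"
  unfolding lspan_mem by (rule bexI[of _ \<one>]) auto

lemma (in ring) lspan_sub: "s\<in>carrier R \<Longrightarrow> a \<in> carrier R \<Longrightarrow> b \<in> carrier R \<Longrightarrow> lspan R (s \<otimes> a) (s \<otimes> b) \<subseteq> lspan R a b"
proof
  fix p assume s: "s\<in>carrier R" "a \<in> carrier R" "b \<in> carrier R" and "p \<in> lspan R (s \<otimes> a) (s \<otimes> b)"
  then obtain t where t: "t \<in> carrier R" "p = (t \<otimes> (s \<otimes> a), t \<otimes> (s \<otimes> b))" unfolding lspan_mem by blast
  hence "p = ((t \<otimes> s) \<otimes> a, (t \<otimes> s) \<otimes> b)" using s by (simp add: m_assoc)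
  moreover have "t \<otimes> s \<in> carrier R" using s t by simp
  ultimately show "p \<in> lspan R a b" unfolding lspan_mem by blast
qed

lemma (in ring) lspan_unit: "u \<in> Units R \<Longrightarrow> a \<in> carrier R \<Longrightarrow> b \<in> carrier R \<Longrightarrow> lspan R (u \<otimes> a) (u \<otimes> b) = lspan R a b"
proof
  assume u: "u \<in> Units R" "a \<in> carrier R" "b \<in> carrier R"
  have uc: "u \<in> carrier R" "inv u \<in> carrier R" using u(1) by auto
  show "lspan R (u \<otimes> a) (u \<otimes> b) \<subseteq> lspan R a b" using u uc lspan_sub by blast
  have "lspan R (inv u \<otimes> (u \<otimes> a)) (inv u \<otimes> (u \<otimes> b)) \<subseteq> lspan R (u \<otimes> a) (u \<otimes> b)"
    using u uc by (intro lspan_sub) auto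
  moreover have "inv u \<otimes> (u \<otimes> a) = a" "inv u \<otimes> (u \<otimes> b) = b"
    using u uc by (simp_all add: m_assoc[symmetric] Units_l_inv)
  ultimately show "lspan R a b \<subseteq> lspan R (u \<otimes> a) (u \<otimes> b)" by simp
qed

lemma (in ring) lspan_eqD:
  assumes "lspan R a b = lspan R a' b'" "a' \<in> carrier R" "b' \<in> carrier R"
  shows "\<exists>s\<in>carrier R. a' = s \<otimes> a \<and> b' = s \<otimes> b"
proof -
  have "(a', b') \<in> lspan R a b" using lspan_self[OF assms(2,3)] assms(1) by simp
  thus ?thesis unfolding lspan_mem by simp
qed

lemma lspan_hom_eq:
  assumes "ring_hom_ring R S h" "lspan R a b = lspan R a' b'" "a \<in> carrier R" "b \<in> carrier R" "a' \<in> carrier R" "b' \<in> carrier R"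
  shows "lspan S (h a) (h b) = lspan S (h a') (h b')"
proof -
  interpret H: ring_hom_ring R S h by fact
  obtain s where s: "s \<in> carrier R" "a' = s \<otimes>\<^bsub>R\<^esub> a" "b' = s \<otimes>\<^bsub>R\<^esub> b"
    using H.R.lspan_eqD[OF assms(2,5,6)] by blast
  obtain t where t: "t \<in> carrier R" "a = t \<otimes>\<^bsub>R\<^esub> a'" "b = t \<otimes>\<^bsub>R\<^esub> b'"
    using H.R.lspan_eqD[OF assms(2)[symmetric] assms(3,4)] by blast
  have "lspan S (h s \<otimes>\<^bsub>S\<^esub> h a) (h s \<otimes>\<^bsub>S\<^esub> h b) \<subseteq> lspan S (h a) (h b)"
    using s assms by (intro H.S.lspan_sub) auto
  moreover have "h s \<otimes>\<^bsub>S\<^esub> h a = h a'" "h s \<otimes>\<^bsub>S\<^esub> h b = h b'" using s assms by simp_all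
  moreover have "lspan S (h t \<otimes>\<^bsub>S\<^esub> h a') (h t \<otimes>\<^bsub>S\<^esub> h b') \<subseteq> lspan S (h a') (h b')"
    using t assms by (intro H.S.lspan_sub) auto
  moreover have "h t \<otimes>\<^bsub>S\<^esub> h a' = h a" "h t \<otimes>\<^bsub>S\<^esub> h b' = h b" using t assms by simp_all
  ultimately show ?thesis by auto
qed

lemma lspan_swap: "lspan S b a = prod.swap ` lspan S a b"
  unfolding lspan_def by auto

lemma (in ring) admissible_swap: assumes "admissible R A a b" "A \<subseteq> carrier R" shows "admissible R A b a"
proof -
  from assms obtain c d a' b' c' d' where k: "a\<in>A" "b\<in>A" "c\<in>A" "d\<in>A" "a'\<in>A" "b'\<in>A" "c'\<in>A" "d'\<in>A"
    and e: "a \<otimes> a' \<oplus> b \<otimes> c' = \<one>"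
        "a \<otimes> b' \<oplus> b \<otimes> d' = \<zero>"
        "c \<otimes> a' \<oplus> d \<otimes> c' = \<zero>"
        "c \<otimes> b' \<oplus> d \<otimes> d' = \<one>"
        "a' \<otimes> a \<oplus> b' \<otimes> c = \<one>"
        "a' \<otimes> b \<oplus> b' \<otimes> d = \<zero>"
        "c' \<otimes> a \<oplus> d' \<otimes> c = \<zero>"
        "c' \<otimes> b \<oplus> d' \<otimes> d = \<one>"
    unfolding admissible_def invertible2_def by blast
  have c: "a\<in>carrier R" "b\<in>carrier R" "c\<in>carrier R" "d\<in>carrier R" "a'\<in>carrier R" "b'\<in>carrier R" "c'\<in>carrier R" "d'\<in>carrier R"
    using k assms(2) by auto
  have f: "b \<otimes> c' \<oplus> a \<otimes> a' = \<one>"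
        "b \<otimes> d' \<oplus> a \<otimes> b' = \<zero>"
        "d \<otimes> c' \<oplus> c \<otimes> a' = \<zero>"
        "d \<otimes> d' \<oplus> c \<otimes> b' = \<one>"
        "c' \<otimes> b \<oplus> d' \<otimes> d = \<one>"
        "c' \<otimes> a \<oplus> d' \<otimes> c = \<zero>"
        "a' \<otimes> b \<oplus> b' \<otimes> d = \<zero>"
        "a' \<otimes> a \<oplus> b' \<otimes> c = \<one>"
    using e c by (simp_all add: a_comm)
  have "invertible2 R A b a d c"
    unfolding invertible2_def using k f by blast
  thus ?thesis unfolding admissible_def by blast
qed



context ring begin

lemma line_ext_inj:
  assumes K: "subfield K R" and dim: "dimension n K E" and v: "v \<in> carrier R" "v \<notin> E"
  shows "inj_on (\<lambda>(k, e). k \<otimes> v \<oplus> e) (K \<times> E)"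
proof (rule inj_onI, clarify)
  fix k e k' e' assume k: "k \<in> K" "e \<in> E" "k' \<in> K" "e' \<in> E" and eq: "k \<otimes> v \<oplus> e = k' \<otimes> v \<oplus> e'"
  have Kc: "K \<subseteq> carrier R" using subfieldE(3)[OF K] .
  have Ec: "E \<subseteq> carrier R" using space_subgroup_props(1)[OF K dim] .
  have c: "k \<in> carrier R" "k' \<in> carrier R" "e \<in> carrier R" "e' \<in> carrier R" using k Kc Ec by auto
  have "(k \<ominus> k') \<otimes> v = e' \<ominus> e"
  proof -
    have "(k \<ominus> k') \<otimes> v = k \<otimes> v \<ominus> k' \<otimes> v" using c v by (simp add: l_minus minus_eq l_distr)
    also have "... = (k \<otimes> v \<oplus> e) \<ominus> e \<ominus> k' \<otimes> v" using c v by (simp add: minus_eq a_assoc r_neg)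
    also have "... = (k' \<otimes> v \<oplus> e') \<ominus> e \<ominus> k' \<otimes> v" using eq by simp
    also have "... = e' \<ominus> e" using c v by (simp add: minus_eq a_ac r_neg)
    finally show ?thesis .
  qed
  moreover have "e' \<ominus> e \<in> E" using space_subgroup_props(3,4)[OF K dim] k by (simp add: minus_eq)
  moreover have "k \<ominus> k' \<in> K" using subringE(5,7)[OF subfieldE(1)[OF K]] k by (simp add: minus_eq)
  ultimately have "k \<ominus> k' = \<zero>" using space_subgroup_props(6)[OF K dim, of "k \<ominus> k'" v] v by force
  hence kk: "k = k'" using c by (metis minus_equality r_right_minus_eq)
  hence "e = e'" using eq c v by simp
  thus "k = k' \<and> e = e'" using kk by simp
qed

lemma dimension_card:
  assumes "dimension n K E" "subfield K R"
  shows "card E = card K ^ n"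
  using assms
proof (induct n K E rule: dimension.induct)
  case (zero_dim K) thus ?case by simp
next
  case (Suc_dim v E n K)
  have "line_extension K v E = (\<lambda>(k, e). k \<otimes> v \<oplus> e) ` (K \<times> E)"
    unfolding line_extension_mem_iff set_eq_iff by (auto simp: line_extension_mem_iff)
  hence "card (line_extension K v E) = card (K \<times> E)"
    using card_image[OF line_ext_inj[OF Suc_dim(5,3,1,2)]] by simp
  thus ?case using Suc_dim by (simp add: card_cartesian_product)
qed

end


lemma adm_carrier: "admissible S A a b \<Longrightarrow> a \<in> A \<and> b \<in> A"
  unfolding admissible_def invertible2_def by blast

locale lr = ring R for R (structure) +
  fixes I assumes I_ideal: "ideal I R" and I_def: "I = carrier R - Units R"
begin

abbreviation F where "F \<equiv> R Quot I"
abbreviation h where "h \<equiv> a_r_coset R I"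

lemma hom: "ring_hom_ring R F h"
  using ideal.rcos_ring_hom_ring[OF I_ideal] .

lemma Fring: "ring F"
  using ideal.quotient_is_ring[OF I_ideal] .

lemma Isub: "I \<subseteq> carrier R" using I_def by auto

lemma F_zero: "\<zero>\<^bsub>F\<^esub> = I" by (simp add: FactRing_def)

lemma carrierF: "carrier F = h ` carrier R"
  unfolding FactRing_def A_RCOSETS_def' by auto

lemma h_zero_iff: assumes "x \<in> carrier R" shows "h x = I \<longleftrightarrow> x \<in> I"
proof
  assume "h x = I"
  moreover have "x \<in> h x" using assms ideal.Icarr[OF I_ideal] additive_subgroup.zero_closed[OF ideal.axioms(1)[OF I_ideal]]
    unfolding a_r_coset_def' by force
  ultimately show "x \<in> I" by simp
next
  assume x: "x \<in> I"
  have add: "\<And>i j. i \<in> I \<Longrightarrow> j \<in> I \<Longrightarrow> i \<oplus> j \<in> I"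
    using additive_subgroup.a_closed[OF ideal.axioms(1)[OF I_ideal]] by blast
  have neg: "\<And>i. i \<in> I \<Longrightarrow> \<ominus> i \<in> I"
    using additive_subgroup.a_inv_closed[OF ideal.axioms(1)[OF I_ideal]] by blast
  show "h x = I"
  proof
    show "h x \<subseteq> I" unfolding a_r_coset_def' using add x by auto
    show "I \<subseteq> h x"
    proof
      fix j assume j: "j \<in> I"
      have "j = (j \<oplus> \<ominus> x) \<oplus> x" using j x Isub by (simp add: a_assoc l_neg subset_iff)
      moreover have "j \<oplus> \<ominus> x \<in> I" using add neg j x by blast
      ultimately show "j \<in> h x" unfolding a_r_coset_def' by blast
    qed
  qed
qed

lemma h_eq_iff: assumes "x \<in> carrier R" "y \<in> carrier R" shows "h x = h y \<longleftrightarrow> x \<ominus> y \<in> I"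
proof -
  interpret H: ring_hom_ring R F h by (rule hom)
  have "h (x \<ominus> y) = h x \<ominus>\<^bsub>F\<^esub> h y" using assms by (simp add: minus_eq H.S.minus_eq)
  moreover have "h x \<ominus>\<^bsub>F\<^esub> h y = \<zero>\<^bsub>F\<^esub> \<longleftrightarrow> h x = h y" using assms by (simp add: H.S.r_right_minus_eq)
  ultimately show ?thesis using h_zero_iff[of "x \<ominus> y"] assms F_zero by simp
qed

lemma one_notin: "\<one> \<notin> I" using I_def by simp

lemma notin_I_unit: "x \<in> carrier R \<Longrightarrow> x \<notin> I \<Longrightarrow> x \<in> Units R" using I_def by simp

lemma h_unit: assumes "x \<in> Units R" shows "h x \<in> Units F"
proof -
  interpret H: ring_hom_ring R F h by (rule hom)
  have "h (inv x) \<otimes>\<^bsub>F\<^esub> h x = \<one>\<^bsub>F\<^esub>" "h x \<otimes>\<^bsub>F\<^esub> h (inv x) = \<one>\<^bsub>F\<^esub>"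
    using assms by (metis H.hom_mult H.hom_one Units_inv_closed Units_closed Units_l_inv,
                    metis H.hom_mult H.hom_one Units_inv_closed Units_closed Units_r_inv)
  thus ?thesis unfolding Units_def using assms by auto
qed

lemma F_one_ne_zero: "\<one>\<^bsub>F\<^esub> \<noteq> \<zero>\<^bsub>F\<^esub>"
proof -
  interpret H: ring_hom_ring R F h by (rule hom)
  show ?thesis using h_zero_iff[of \<one>] one_notin F_zero by (simp flip: H.hom_one)
qed

lemma adm_unit: assumes "admissible R (carrier R) a b" shows "a \<in> Units R \<or> b \<in> Units R"
proof (rule ccontr)
  assume n: "\<not> (a \<in> Units R \<or> b \<in> Units R)"
  from assms obtain c d a' c' where k: "a \<in> carrier R" "b \<in> carrier R" "a' \<in> carrier R" "c' \<in> carrier R"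
    and e: "a \<otimes> a' \<oplus> b \<otimes> c' = \<one>"
    unfolding admissible_def invertible2_def by blast
  have "a \<in> I" "b \<in> I" using n k I_def by auto
  hence "a \<otimes> a' \<in> I" "b \<otimes> c' \<in> I" using ideal.I_r_closed[OF I_ideal] k by auto
  hence "a \<otimes> a' \<oplus> b \<otimes> c' \<in> I"
    using additive_subgroup.a_closed[OF ideal.axioms(1)[OF I_ideal]] by blast
  thus False using e one_notin by simp
qed

lemma admF_nonzero: assumes "admissible F (carrier F) \<alpha> \<beta>" shows "\<alpha> \<noteq> \<zero>\<^bsub>F\<^esub> \<or> \<beta> \<noteq> \<zero>\<^bsub>F\<^esub>"
proof (rule ccontr)
  interpret F: ring F by (rule Fring)
  assume n: "\<not> (\<alpha> \<noteq> \<zero>\<^bsub>F\<^esub> \<or> \<beta> \<noteq> \<zero>\<^bsub>F\<^esub>)"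
  from assms obtain c d a' c' where k: "a' \<in> carrier F" "c' \<in> carrier F"
    and e: "\<alpha> \<otimes>\<^bsub>F\<^esub> a' \<oplus>\<^bsub>F\<^esub> \<beta> \<otimes>\<^bsub>F\<^esub> c' = \<one>\<^bsub>F\<^esub>"
    unfolding admissible_def invertible2_def by blast
  thus False using n F_one_ne_zero by simp
qed

lemma inj_K: assumes "subfield K R" shows "inj_on h K"
proof (rule inj_onI)
  fix x y assume xy: "x \<in> K" "y \<in> K" "h x = h y"
  have Kc: "K \<subseteq> carrier R" using subfieldE(3)[OF assms] .
  have "x \<ominus> y \<in> I" using h_eq_iff xy Kc by auto
  moreover have "x \<ominus> y \<in> K" using subringE(5,7)[OF subfieldE(1)[OF assms]] xy by (simp add: minus_eq)
  ultimately have "x \<ominus> y = \<zero>" using subfield_m_inv(2)[OF assms, of "x \<ominus> y"] one_notin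
    ideal.I_r_closed[OF I_ideal, of "x \<ominus> y" "inv (x \<ominus> y)"] subfield_m_inv(1)[OF assms, of "x \<ominus> y"] Kc by force
  thus "x = y" using xy Kc by (metis subsetD r_right_minus_eq)
qed


definition fib where
  "fib P = {p. \<exists>a b. admissible R (carrier R) a b \<and> p = lspan R a b \<and> lspan F (h a) (h b) = P}"

lemma fib_sub: "fib P \<subseteq> proj_line R"
  unfolding fib_def proj_line_def by blast


lemma add_minus1: "x \<in> carrier R \<Longrightarrow> y \<in> carrier R \<Longrightarrow> (x \<oplus> y) \<ominus> x = y"
  by (simp add: minus_eq a_comm[of x y] a_assoc r_neg)

lemma add_minus2: "x \<in> carrier R \<Longrightarrow> y \<in> carrier R \<Longrightarrow> x \<oplus> (y \<ominus> x) = y"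
  by (simp add: minus_eq a_lcomm[of x y] r_neg)

lemma adm_1: assumes "c \<in> carrier R" shows "admissible R (carrier R) \<one> c"
proof -
  have m: "\<one> \<in> carrier R" "c \<in> carrier R" "\<zero> \<in> carrier R" "\<ominus> c \<in> carrier R" using assms by auto
  have e: "\<one> \<otimes> \<one> \<oplus> c \<otimes> \<zero> = \<one>"
        "\<one> \<otimes> \<ominus> c \<oplus> c \<otimes> \<one> = \<zero>"
        "\<zero> \<otimes> \<one> \<oplus> \<one> \<otimes> \<zero> = \<zero>"
        "\<zero> \<otimes> \<ominus> c \<oplus> \<one> \<otimes> \<one> = \<one>"
        "\<one> \<otimes> \<one> \<oplus> \<ominus> c \<otimes> \<zero> = \<one>"
        "\<one> \<otimes> c \<oplus> \<ominus> c \<otimes> \<one> = \<zero>"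
        "\<zero> \<otimes> \<one> \<oplus> \<one> \<otimes> \<zero> = \<zero>"
        "\<zero> \<otimes> c \<oplus> \<one> \<otimes> \<one> = \<one>"
    using assms by (simp_all add: r_neg l_neg)
  have "invertible2 R (carrier R) \<one> c \<zero> \<one>"
    unfolding invertible2_def using m e by blast
  thus ?thesis unfolding admissible_def by blast
qed

lemma fib_unit:
  assumes a0: "a0 \<in> Units R" and b0: "b0 \<in> carrier R"
  defines "c \<equiv> inv a0 \<otimes> b0"
  shows "fib (lspan F (h a0) (h b0)) = (\<lambda>i. lspan R \<one> (c \<oplus> i)) ` I"
    and "inj_on (\<lambda>i. lspan R \<one> (c \<oplus> i)) I"
proof -
  interpret H: ring_hom_ring R F h by (rule hom)
  have a0c: "a0 \<in> carrier R" "inv a0 \<in> carrier R" using a0 by auto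
  have cc: "c \<in> carrier R" using a0c b0 c_def by simp
  have "h a0 \<otimes>\<^bsub>F\<^esub> h c = h b0"
    using a0c b0 a0 by (simp add: c_def flip: H.hom_mult) (simp add: m_assoc[symmetric])
  moreover have "h a0 \<otimes>\<^bsub>F\<^esub> \<one>\<^bsub>F\<^esub> = h a0" using a0c by simp
  ultimately have P0: "lspan F (h a0) (h b0) = lspan F \<one>\<^bsub>F\<^esub> (h c)"
    using H.S.lspan_unit[OF h_unit[OF a0], of "\<one>\<^bsub>F\<^esub>" "h c"] cc by simp
  show "fib (lspan F (h a0) (h b0)) = (\<lambda>i. lspan R \<one> (c \<oplus> i)) ` I"
  proof
    show "(\<lambda>i. lspan R \<one> (c \<oplus> i)) ` I \<subseteq> fib (lspan F (h a0) (h b0))"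
    proof clarify
      fix i assume i: "i \<in> I"
      have ic: "i \<in> carrier R" using i Isub by auto
      have "h (c \<oplus> i) = h c" using h_eq_iff[of "c \<oplus> i" c] cc ic i
        by (simp add: add_minus1)
      hence "lspan F (h \<one>) (h (c \<oplus> i)) = lspan F (h a0) (h b0)" using P0 by simp
      thus "lspan R \<one> (c \<oplus> i) \<in> fib (lspan F (h a0) (h b0))"
        unfolding fib_def using adm_1[of "c \<oplus> i"] cc ic by blast
    qed
    show "fib (lspan F (h a0) (h b0)) \<subseteq> (\<lambda>i. lspan R \<one> (c \<oplus> i)) ` I"
    proof
      fix p assume "p \<in> fib (lspan F (h a0) (h b0))"
      then obtain a b where ab: "admissible R (carrier R) a b" "p = lspan R a b"
        "lspan F (h a) (h b) = lspan F \<one>\<^bsub>F\<^esub> (h c)" unfolding fib_def P0 by blast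
      have abc: "a \<in> carrier R" "b \<in> carrier R" using adm_carrier[OF ab(1)] by auto
      obtain s where s: "s \<in> carrier F" "h a = s \<otimes>\<^bsub>F\<^esub> \<one>\<^bsub>F\<^esub>" "h b = s \<otimes>\<^bsub>F\<^esub> h c"
        using H.S.lspan_eqD[OF ab(3)[symmetric] H.hom_closed[OF abc(1)] H.hom_closed[OF abc(2)]] by blast
      obtain t where t: "t \<in> carrier F" "\<one>\<^bsub>F\<^esub> = t \<otimes>\<^bsub>F\<^esub> h a"
        using H.S.lspan_eqD[OF ab(3) H.S.one_closed H.hom_closed[OF cc]] by blast
      have "a \<notin> I"
      proof
        assume "a \<in> I"
        hence "h a = \<zero>\<^bsub>F\<^esub>" using h_zero_iff abc F_zero by simp
        thus False using t F_one_ne_zero by simp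
      qed
      hence au: "a \<in> Units R" using notin_I_unit abc by simp
      hence aic: "inv a \<in> carrier R" by simp
      have sa: "s = h a" using s by simp
      have "h (inv a \<otimes> b) = (h (inv a) \<otimes>\<^bsub>F\<^esub> h a) \<otimes>\<^bsub>F\<^esub> h c"
        using aic abc s(1) cc by (simp add: s(3) sa H.S.m_assoc)
      also have "... = h c" using au aic abc cc by (simp flip: H.hom_mult add: Units_l_inv)
      finally have "h (inv a \<otimes> b) = h c" .
      hence "inv a \<otimes> b \<ominus> c \<in> I" using h_eq_iff[of "inv a \<otimes> b" c] aic abc cc by simp
      moreover have "c \<oplus> (inv a \<otimes> b \<ominus> c) = inv a \<otimes> b" using aic abc cc
        by (simp add: add_minus2)
      moreover have "p = lspan R \<one> (inv a \<otimes> b)"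
        using ab(2) lspan_unit[OF au, of \<one> "inv a \<otimes> b"] abc aic au
        by (simp add: m_assoc[symmetric] Units_r_inv)
      ultimately show "p \<in> (\<lambda>i. lspan R \<one> (c \<oplus> i)) ` I" by (metis image_eqI)
    qed
  qed
  show "inj_on (\<lambda>i. lspan R \<one> (c \<oplus> i)) I"
  proof (rule inj_onI)
    fix i j assume ij: "i \<in> I" "j \<in> I" "lspan R \<one> (c \<oplus> i) = lspan R \<one> (c \<oplus> j)"
    have c2: "i \<in> carrier R" "j \<in> carrier R" using ij Isub by auto
    obtain s where "s \<in> carrier R" "\<one> = s \<otimes> \<one>" "c \<oplus> j = s \<otimes> (c \<oplus> i)"
      using lspan_eqD[OF ij(3) one_closed add.m_closed[OF cc c2(2)]] by blast
    hence "c \<oplus> j = c \<oplus> i" using cc c2 by (metis r_one l_one add.m_closed)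
    thus "i = j" using cc c2 by simp
  qed
qed


lemma fib_unit_card: assumes "a0 \<in> Units R" "b0 \<in> carrier R"
  shows "card (fib (lspan F (h a0) (h b0))) = card I"
  using fib_unit[OF assms] card_image by metis

lemma fib_swap: "fib (prod.swap ` P) = (\<lambda>p. prod.swap ` p) ` fib P"
proof
  show "fib (prod.swap ` P) \<subseteq> (\<lambda>p. prod.swap ` p) ` fib P"
  proof
    fix p assume "p \<in> fib (prod.swap ` P)"
    then obtain a b where ab: "admissible R (carrier R) a b" "p = lspan R a b" "lspan F (h a) (h b) = prod.swap ` P"
      unfolding fib_def by blast
    have "admissible R (carrier R) b a" using admissible_swap[OF ab(1)] by simp
    moreover have "lspan F (h b) (h a) = P" using ab(3) lspan_swap[of F "h b" "h a"] by (simp add: image_image)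
    ultimately have "lspan R b a \<in> fib P" unfolding fib_def by blast
    moreover have "p = prod.swap ` lspan R b a" using ab(2) lspan_swap[of R a b] by (simp add: image_image)
    ultimately show "p \<in> (\<lambda>p. prod.swap ` p) ` fib P" by blast
  qed
  show "(\<lambda>p. prod.swap ` p) ` fib P \<subseteq> fib (prod.swap ` P)"
  proof clarify
    fix p assume "p \<in> fib P"
    then obtain a b where ab: "admissible R (carrier R) a b" "p = lspan R a b" "lspan F (h a) (h b) = P"
      unfolding fib_def by blast
    have "admissible R (carrier R) b a" using admissible_swap[OF ab(1)] by simp
    moreover have "lspan F (h b) (h a) = prod.swap ` P" using ab(3) lspan_swap[of F "h b" "h a"] by simp
    moreover have "prod.swap ` p = lspan R b a" using ab(2) lspan_swap[of R b a] by simp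
    ultimately show "prod.swap ` p \<in> fib (prod.swap ` P)" unfolding fib_def by blast
  qed
qed

lemma inj_swap_img: "inj (\<lambda>p::('x \<times> 'x) set. prod.swap ` p)"
proof (rule injI)
  fix x y :: "('x \<times> 'x) set" assume "prod.swap ` x = prod.swap ` y"
  hence "prod.swap ` prod.swap ` x = prod.swap ` prod.swap ` y" by simp
  thus "x = y" by (simp add: image_image)
qed

lemma fib_card: assumes "P \<in> proj_line F" shows "card (fib P) = card I"
proof -
  obtain \<alpha> \<beta> where P: "P = lspan F \<alpha> \<beta>" "admissible F (carrier F) \<alpha> \<beta>"
    using assms unfolding proj_line_def by blast
  obtain a0 b0 where ab: "a0 \<in> carrier R" "b0 \<in> carrier R" "\<alpha> = h a0" "\<beta> = h b0"
    using adm_carrier[OF P(2)] carrierF by auto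
  have "h a0 \<noteq> I \<or> h b0 \<noteq> I" using admF_nonzero[OF P(2)] ab F_zero by simp
  hence "a0 \<in> Units R \<or> b0 \<in> Units R" using h_zero_iff notin_I_unit ab by blast
  thus ?thesis
  proof
    assume "a0 \<in> Units R" thus ?thesis using fib_unit_card ab P by simp
  next
    assume b0: "b0 \<in> Units R"
    have "P = prod.swap ` lspan F (h b0) (h a0)" using P ab lspan_swap[of F "h a0" "h b0"] by simp
    hence "fib P = (\<lambda>p. prod.swap ` p) ` fib (lspan F (h b0) (h a0))" using fib_swap by simp
    hence "card (fib P) = card (fib (lspan F (h b0) (h a0)))"
      using card_image[OF inj_on_subset[OF inj_swap_img subset_UNIV]] by simp
    thus ?thesis using fib_unit_card[OF b0 ab(1)] by simp
  qed
qed

end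

lemma (in ring) lspan_carrier: "a \<in> carrier R \<Longrightarrow> b \<in> carrier R \<Longrightarrow> lspan R a b \<subseteq> carrier R \<times> carrier R"
  unfolding lspan_def by auto

lemma (in ring) proj_line_finite: "finite (carrier R) \<Longrightarrow> finite (proj_line R)"
proof -
  assume f: "finite (carrier R)"
  have "proj_line R \<subseteq> Pow (carrier R \<times> carrier R)"
  proof
    fix p assume "p \<in> proj_line R"
    then obtain a b where "p = lspan R a b" "admissible R (carrier R) a b" unfolding proj_line_def by blast
    thus "p \<in> Pow (carrier R \<times> carrier R)" using lspan_carrier[of a b] adm_carrier[of R "carrier R" a b] by simp
  qed
  thus ?thesis using f by (simp add: finite_subset)
qed



theorem mainTheorem5:
  fixes R :: "('a, 'b) ring_scheme" and K :: "'a set" and q x \<delta> :: nat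
  assumes "ring R"
    and "finite (carrier R)"
    and "local_ring R"
    and "prime_power q"
    and "subfield K R"
    and "card K = q"
    and "ring.dimension R \<delta> K (carrier R - Units R)"
    and "\<exists>B. blocking_set (R Quot (carrier R - Units R))
               ((\<lambda>k. (carrier R - Units R) +>\<^bsub>R\<^esub> k) ` K) B \<and> card B = x"
  shows "\<exists>B. blocking_set R K B \<and> card B = x * q ^ \<delta>"
proof -
  define I where "I = carrier R - Units R"
  interpret ring R by fact
  interpret L: lr R I
  proof (rule lr.intro[OF assms(1)], rule lr_axioms.intro)
    show "ideal I R" using assms(3) unfolding local_ring_def I_def by blast
  qed (simp add: I_def)
  interpret H: ring_hom_ring R L.F L.h by (rule L.hom)
  obtain B where B: "blocking_set L.F (L.h ` K) B" "card B = x"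
    using assms(8) unfolding I_def by blast
  have Kc: "K \<subseteq> carrier R" using subfieldE(3)[OF assms(5)] .
  define B' where "B' = (\<Union>P\<in>B. L.fib P)"
  have BF: "B \<subseteq> proj_line L.F" using B(1) unfolding blocking_set_def by blast
  have finF: "finite (carrier L.F)" using L.carrierF assms(2) by simp
  have finB: "finite B" using ring.proj_line_finite[OF L.Fring finF] BF finite_subset by blast
  have finfib: "\<And>P. finite (L.fib P)" using proj_line_finite[OF assms(2)] L.fib_sub finite_subset by blast
  have disj: "\<forall>P\<in>B. \<forall>P'\<in>B. P \<noteq> P' \<longrightarrow> L.fib P \<inter> L.fib P' = {}"
  proof (intro ballI impI)
    fix P P' assume PP: "P \<in> B" "P' \<in> B" "P \<noteq> P'"
    show "L.fib P \<inter> L.fib P' = {}"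
    proof (rule ccontr)
      assume "L.fib P \<inter> L.fib P' \<noteq> {}"
      then obtain a b a' b' where ab: "admissible R (carrier R) a b" "lspan L.F (L.h a) (L.h b) = P"
        "admissible R (carrier R) a' b'" "lspan L.F (L.h a') (L.h b') = P'" "lspan R a b = lspan R a' b'"
        unfolding L.fib_def by blast
      have "lspan L.F (L.h a) (L.h b) = lspan L.F (L.h a') (L.h b')"
        using lspan_hom_eq[OF L.hom ab(5)] adm_carrier[OF ab(1)] adm_carrier[OF ab(3)] by blast
      thus False using ab PP by simp
    qed
  qed
  have cardI: "card I = q ^ \<delta>" using dimension_card[OF assms(7)[folded I_def] assms(5)] assms(6) by simp
  have "card B' = (\<Sum>P\<in>B. card (L.fib P))"
    unfolding B'_def using card_UN_disjoint[OF finB] finfib disj by blast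
  also have "... = (\<Sum>P\<in>B. card I)" using L.fib_card BF by (intro sum.cong) auto
  finally have cardB': "card B' = x * q ^ \<delta>" using B(2) cardI by simp
  have "blocking_set R K B'"
    unfolding blocking_set_def
  proof (intro conjI ballI)
    show "B' \<subseteq> proj_line R" unfolding B'_def using L.fib_sub by blast
  next
    fix C assume "C \<in> chains R K"
    then obtain g1 g2 g3 g4 where g: "invertible2 R (carrier R) g1 g2 g3 g4" "C = chain_of R K (g1, g2, g3, g4)"
      unfolding chains_def GL2_def by blast
    have gc: "g1 \<in> carrier R" "g2 \<in> carrier R" "g3 \<in> carrier R" "g4 \<in> carrier R"
      using g(1) unfolding invertible2_def by auto
    have "invertible2 L.F (carrier L.F) (L.h g1) (L.h g2) (L.h g3) (L.h g4)"
      using inv2_hom[OF L.hom subset_refl g(1)] L.carrierF by simp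
    hence "chain_of L.F (L.h ` K) (L.h g1, L.h g2, L.h g3, L.h g4) \<in> chains L.F (L.h ` K)"
      unfolding chains_def GL2_def by blast
    then obtain P where P: "P \<in> B" "P \<in> chain_of L.F (L.h ` K) (L.h g1, L.h g2, L.h g3, L.h g4)"
      using B(1) unfolding blocking_set_def by blast
    then obtain \<alpha> \<beta> where ab: "admissible L.F (L.h ` K) \<alpha> \<beta>"
      "P = lspan L.F (\<alpha> \<otimes>\<^bsub>L.F\<^esub> L.h g1 \<oplus>\<^bsub>L.F\<^esub> \<beta> \<otimes>\<^bsub>L.F\<^esub> L.h g3) (\<alpha> \<otimes>\<^bsub>L.F\<^esub> L.h g2 \<oplus>\<^bsub>L.F\<^esub> \<beta> \<otimes>\<^bsub>L.F\<^esub> L.h g4)"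
      unfolding chain_of_def by blast
    obtain \<gamma> \<delta>' where "invertible2 L.F (L.h ` K) \<alpha> \<beta> \<gamma> \<delta>'" using ab(1) unfolding admissible_def by blast
    then obtain k1 k2 k3 k4 where k: "\<alpha> = L.h k1" "\<beta> = L.h k2" "invertible2 R K k1 k2 k3 k4"
      using inv2_lift[OF L.hom Kc L.inj_K[OF assms(5)]] subringE(2,3,6,7)[OF subfieldE(1)[OF assms(5)]]
      by blast
    have kc: "k1 \<in> carrier R" "k2 \<in> carrier R" using k(3) Kc unfolding invertible2_def by auto
    define p where "p = lspan R (k1 \<otimes>\<^bsub>R\<^esub> g1 \<oplus>\<^bsub>R\<^esub> k2 \<otimes>\<^bsub>R\<^esub> g3) (k1 \<otimes>\<^bsub>R\<^esub> g2 \<oplus>\<^bsub>R\<^esub> k2 \<otimes>\<^bsub>R\<^esub> g4)"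
    have "admissible R K k1 k2" using k(3) unfolding admissible_def by blast
    hence "p \<in> C" unfolding g(2) chain_of_def p_def by blast
    moreover have "p \<in> L.fib P"
    proof -
      have "admissible R (carrier R) (k1 \<otimes>\<^bsub>R\<^esub> g1 \<oplus>\<^bsub>R\<^esub> k2 \<otimes>\<^bsub>R\<^esub> g3) (k1 \<otimes>\<^bsub>R\<^esub> g2 \<oplus>\<^bsub>R\<^esub> k2 \<otimes>\<^bsub>R\<^esub> g4)"
        using inv2_prod[OF Kc k(3) g(1)] .
      moreover have "lspan L.F (L.h (k1 \<otimes>\<^bsub>R\<^esub> g1 \<oplus>\<^bsub>R\<^esub> k2 \<otimes>\<^bsub>R\<^esub> g3)) (L.h (k1 \<otimes>\<^bsub>R\<^esub> g2 \<oplus>\<^bsub>R\<^esub> k2 \<otimes>\<^bsub>R\<^esub> g4)) = P"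
        using ab(2) k kc gc by simp
      ultimately show ?thesis unfolding L.fib_def p_def by blast
    qed
    hence "p \<in> B'" unfolding B'_def using P(1) by blast
    ultimately show "C \<inter> B' \<noteq> {}" by blast
  qed
  thus ?thesis using cardB' by blast
qed

end
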